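(* Let $\mathcal H$ be a finite-dimensional Hilbert space, $U(t,s)$ a unitary evolution, $|\psi\rangle$ an initial pure state at time $t_0$, and for times $t_0<t_1<\dots<t_n$ let $\hat\sigma^{(k)}=\{|\phi^{(k)}_i\rangle\langle\phi^{(k)}_i|\}_i$, $k=1,\dots,n$, be sets of rank-1 projectors onto orthonormal bases of $\mathcal H$ (Schrödinger picture), with $|\phi^{(0)}\rangle:=|\psi\rangle$. Form the graph whose vertices at time $t_k$ are the basis vectors $|\phi^{(k)}_i\rangle$, with an edge between $|\phi^{(k)}_j\rangle$ and $|\phi^{(k+1)}_i\rangle$ iff the Green function $G^{ij}(t_{k+1},t_k)=\langle\phi^{(k+1)}_i|U(t_{k+1},t_k)|\phi^{(k)}_j\rangle$ is nonzero. A loop is the closed walk formed by two distinct forward-in-time paths $\alpha=(\alpha_1,\dots,\alpha_n)$, $\beta=(\beta_1,\dots,\beta_n)$ from $|\psi\rangle$ to the same final vertex ($\alpha_n=\beta_n$), and its product of Green functions is $\prod_{k=0}^{n-1}G^{\alpha_{k+1}\alpha_k}(t_{k+1},t_k)\cdot\prod_{k=0}^{n-1}\overline{G^{\beta_{k+1}\beta_k}(t_{k+1},t_k)}$ (with $\alpha_0=\beta_0$ the initial vertex; traversing an edge backward contributes the complex conjugate). If the product of Green functions around every loop is purely imaginary (zero counting as purely imaginary, so in particular the absence of loops suffices), then the family of fine-grained histories $\{|\psi\rangle\langle\psi|,\sigma^{(1)},\dots,\sigma^{(n)}\}$ is weakly consistent.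
   Context: Here $\sigma^{(k)}$ denotes the Heisenberg-picture version of $\hat\sigma^{(k)}$, i.e. the projectors $P^{(k)}_i=U(t_k,t_0)^\dagger|\phi^{(k)}_i\rangle\langle\phi^{(k)}_i|U(t_k,t_0)$. For a history $\alpha=(\alpha_1,\dots,\alpha_n)$ the history operator is $C_\alpha=P^{(1)}_{\alpha_1}\cdots P^{(n)}_{\alpha_n}$, its probability is $Pr(\alpha)=\mathrm{Tr}\{C_\alpha^\dagger\rho C_\alpha\}$ and the coherence function is $D(\alpha;\beta)=\mathrm{Tr}\{C_\alpha^\dagger\rho C_\beta\}$, with $\rho=|\psi\rangle\langle\psi|$. The family is weakly consistent if $\mathrm{Re}\,D(\alpha;\beta)=\delta_{\alpha\beta}Pr(\alpha)$ for all histories $\alpha,\beta$, where $\delta_{\alpha\beta}=\prod_k\delta_{\alpha_k\beta_k}$. *)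

theory Defs
  imports "HOL-Analysis.Analysis"
begin

text \<open>Finite-dimensional Hilbert space: complex ^ 'n (dimension CARD('n)).
  Operators: complex ^ 'n ^ 'n.\<close>

definition cinner :: "complex ^ 'n \<Rightarrow> complex ^ 'n \<Rightarrow> complex" where
  "cinner x y = (\<Sum>i\<in>UNIV. cnj (x $ i) * y $ i)"

definition adj :: "complex ^ 'n ^ 'n \<Rightarrow> complex ^ 'n ^ 'n" where
  "adj A = (\<chi> i j. cnj (A $ j $ i))"

definition ctrace :: "complex ^ 'n ^ 'n \<Rightarrow> complex" where
  "ctrace A = (\<Sum>i\<in>UNIV. A $ i $ i)"

definition proj :: "complex ^ 'n \<Rightarrow> complex ^ 'n ^ 'n" where
  "proj v = (\<chi> i j. v $ i * cnj (v $ j))"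

definition unitary_op :: "complex ^ 'n ^ 'n \<Rightarrow> bool" where
  "unitary_op A \<longleftrightarrow> adj A ** A = mat 1 \<and> A ** adj A = mat 1"

definition heis_proj ::
  "(real \<Rightarrow> real \<Rightarrow> complex ^ 'n ^ 'n) \<Rightarrow> (nat \<Rightarrow> real) \<Rightarrow> (nat \<Rightarrow> 'n \<Rightarrow> complex ^ 'n)
    \<Rightarrow> nat \<Rightarrow> 'n \<Rightarrow> complex ^ 'n ^ 'n" where
  "heis_proj U t phi k i = adj (U (t k) (t 0)) ** proj (phi k i) ** U (t k) (t 0)"

text \<open>History operator C_alpha = P^(1)_{alpha 1} ... P^(m)_{alpha m}
  (a history is a function alpha, only its values on {1..n} matter).\<close>
fun hist_op ::
  "(real \<Rightarrow> real \<Rightarrow> complex ^ 'n ^ 'n) \<Rightarrow> (nat \<Rightarrow> real) \<Rightarrow> (nat \<Rightarrow> 'n \<Rightarrow> complex ^ 'n)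
    \<Rightarrow> nat \<Rightarrow> (nat \<Rightarrow> 'n) \<Rightarrow> complex ^ 'n ^ 'n" where
  "hist_op U t phi 0 \<alpha> = mat 1"
| "hist_op U t phi (Suc m) \<alpha> = hist_op U t phi m \<alpha> ** heis_proj U t phi (Suc m) (\<alpha> (Suc m))"

definition coherence ::
  "(real \<Rightarrow> real \<Rightarrow> complex ^ 'n ^ 'n) \<Rightarrow> (nat \<Rightarrow> real) \<Rightarrow> complex ^ 'n
    \<Rightarrow> (nat \<Rightarrow> 'n \<Rightarrow> complex ^ 'n) \<Rightarrow> nat \<Rightarrow> (nat \<Rightarrow> 'n) \<Rightarrow> (nat \<Rightarrow> 'n) \<Rightarrow> complex" where
  "coherence U t psi phi n \<alpha> \<beta> =
     ctrace (adj (hist_op U t phi n \<alpha>) ** proj psi ** hist_op U t phi n \<beta>)"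

definition hist_prob ::
  "(real \<Rightarrow> real \<Rightarrow> complex ^ 'n ^ 'n) \<Rightarrow> (nat \<Rightarrow> real) \<Rightarrow> complex ^ 'n
    \<Rightarrow> (nat \<Rightarrow> 'n \<Rightarrow> complex ^ 'n) \<Rightarrow> nat \<Rightarrow> (nat \<Rightarrow> 'n) \<Rightarrow> complex" where
  "hist_prob U t psi phi n \<alpha> =
     ctrace (adj (hist_op U t phi n \<alpha>) ** proj psi ** hist_op U t phi n \<alpha>)"

definition weakly_consistent ::
  "(real \<Rightarrow> real \<Rightarrow> complex ^ 'n ^ 'n) \<Rightarrow> (nat \<Rightarrow> real) \<Rightarrow> complex ^ 'n
    \<Rightarrow> (nat \<Rightarrow> 'n \<Rightarrow> complex ^ 'n) \<Rightarrow> nat \<Rightarrow> bool" where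
  "weakly_consistent U t psi phi n \<longleftrightarrow>
     (\<forall>\<alpha> \<beta>. complex_of_real (Re (coherence U t psi phi n \<alpha> \<beta>)) =
        (if (\<forall>k\<in>{1..n}. \<alpha> k = \<beta> k) then hist_prob U t psi phi n \<alpha> else 0))"

text \<open>Graph vertices: at time t_0 the single vertex psi (index irrelevant), at t_k (k \<ge> 1) the basis vectors.\<close>
definition vertex :: "complex ^ 'n \<Rightarrow> (nat \<Rightarrow> 'n \<Rightarrow> complex ^ 'n) \<Rightarrow> nat \<Rightarrow> 'n \<Rightarrow> complex ^ 'n" where
  "vertex psi phi k j = (if k = 0 then psi else phi k j)"

definition green ::
  "(real \<Rightarrow> real \<Rightarrow> complex ^ 'n ^ 'n) \<Rightarrow> (nat \<Rightarrow> real) \<Rightarrow> complex ^ 'n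
    \<Rightarrow> (nat \<Rightarrow> 'n \<Rightarrow> complex ^ 'n) \<Rightarrow> nat \<Rightarrow> 'n \<Rightarrow> 'n \<Rightarrow> complex" where
  "green U t psi phi k i j =
     cinner (vertex psi phi (Suc k) i) (U (t (Suc k)) (t k) *v vertex psi phi k j)"

definition is_path ::
  "(real \<Rightarrow> real \<Rightarrow> complex ^ 'n ^ 'n) \<Rightarrow> (nat \<Rightarrow> real) \<Rightarrow> complex ^ 'n
    \<Rightarrow> (nat \<Rightarrow> 'n \<Rightarrow> complex ^ 'n) \<Rightarrow> nat \<Rightarrow> (nat \<Rightarrow> 'n) \<Rightarrow> bool" where
  "is_path U t psi phi n \<alpha> \<longleftrightarrow> (\<forall>k<n. green U t psi phi k (\<alpha> (Suc k)) (\<alpha> k) \<noteq> 0)"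

definition path_amp ::
  "(real \<Rightarrow> real \<Rightarrow> complex ^ 'n ^ 'n) \<Rightarrow> (nat \<Rightarrow> real) \<Rightarrow> complex ^ 'n
    \<Rightarrow> (nat \<Rightarrow> 'n \<Rightarrow> complex ^ 'n) \<Rightarrow> nat \<Rightarrow> (nat \<Rightarrow> 'n) \<Rightarrow> complex" where
  "path_amp U t psi phi n \<alpha> = (\<Prod>k<n. green U t psi phi k (\<alpha> (Suc k)) (\<alpha> k))"

end

theory Submission imports Defs begin

lemma adj_mult: "adj (A ** B) = adj B ** adj (A :: complex ^ 'n ^ 'n)"
  by (simp add: adj_def matrix_matrix_mult_def vec_eq_iff mult.commute)

lemma adj_adj: "adj (adj A) = A"
  by (simp add: adj_def vec_eq_iff)

lemma adj_one: "adj (mat 1 :: complex ^ 'n ^ 'n) = mat 1"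
  by (simp add: adj_def vec_eq_iff mat_def)

lemma adj_proj: "adj (proj v) = proj v"
  by (simp add: adj_def proj_def vec_eq_iff mult.commute)

lemma cinner_adj: "cinner (adj A *v x) y = cinner x (A *v y)"
proof -
  have "cinner (adj A *v x) y = (\<Sum>i\<in>UNIV. \<Sum>j\<in>UNIV. A$j$i * cnj (x$j) * y$i)"
    unfolding cinner_def adj_def matrix_vector_mult_def
    by (simp add: sum_distrib_right sum_distrib_left mult_ac)
  also have "\<dots> = (\<Sum>j\<in>UNIV. \<Sum>i\<in>UNIV. A$j$i * cnj (x$j) * y$i)"
    by (rule sum.swap)
  also have "\<dots> = cinner x (A *v y)"
    by (simp add: cinner_def matrix_vector_mult_def sum_distrib_left mult_ac)
  finally show ?thesis .
qed

lemma proj_mv: "proj v *v y = cinner v y *s v"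
  by (simp add: proj_def cinner_def matrix_vector_mult_def vec_eq_iff sum_distrib_left mult_ac)

lemma cinner_scale: "cinner (a *s x) (b *s y) = cnj a * b * cinner x y"
  by (simp add: cinner_def sum_distrib_left mult_ac)

lemma ctrace_proj: "ctrace (A ** proj psi ** B) = cinner (adj B *v psi) (A *v psi)"
proof -
  have "ctrace (A ** proj psi ** B) = (\<Sum>i\<in>UNIV. \<Sum>l\<in>UNIV. \<Sum>k\<in>UNIV. A$i$k * psi$k * cnj (psi$l) * B$l$i)"
    unfolding ctrace_def proj_def matrix_matrix_mult_def
    by (simp add: sum_distrib_right sum_distrib_left mult_ac)
  also have "\<dots> = cinner (adj B *v psi) (A *v psi)"
    by (simp add: cinner_def adj_def matrix_vector_mult_def sum_distrib_left sum_distrib_right mult_ac)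
  finally show ?thesis .
qed

lemma unit_cinner: assumes "unitary_op V" shows "cinner (adj V *v x) (adj V *v y) = cinner x y"
  using assms by (simp add: cinner_adj matrix_vector_mul_assoc unitary_op_def)


lemma mv_scale: "A *v (c *s x) = c *s (A *v (x :: complex ^ 'n))"
  by (simp add: matrix_vector_mult_def vec_eq_iff sum_distrib_left mult_ac)

lemma hist_agree: "(\<forall>k\<in>{1..m}. \<alpha> k = \<beta> k) \<Longrightarrow> hist_op U t phi m \<alpha> = hist_op U t phi m \<beta>"
  by (induction m) auto

theorem theorem2:
  fixes U :: "real \<Rightarrow> real \<Rightarrow> complex ^ 'n ^ 'n"
    and t :: "nat \<Rightarrow> real"
    and psi :: "complex ^ 'n"
    and phi :: "nat \<Rightarrow> 'n \<Rightarrow> complex ^ 'n"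
    and n :: nat
  assumes unitary: "\<And>a b. unitary_op (U a b)"
    and evol: "\<And>a b c. U a b ** U b c = U a c"
    and times: "\<And>k. k < n \<Longrightarrow> t k < t (Suc k)"
    and psi_norm: "cinner psi psi = 1"
    and onb: "\<And>k i j. k \<in> {1..n} \<Longrightarrow> cinner (phi k i) (phi k j) = (if i = j then 1 else 0)"
    and loops: "\<And>\<alpha> \<beta>. is_path U t psi phi n \<alpha> \<Longrightarrow> is_path U t psi phi n \<beta> \<Longrightarrow>
                  (\<exists>k\<in>{1..n}. \<alpha> k \<noteq> \<beta> k) \<Longrightarrow> \<alpha> n = \<beta> n \<Longrightarrow>
                  Re (path_amp U t psi phi n \<alpha> * cnj (path_amp U t psi phi n \<beta>)) = 0"
  shows "weakly_consistent U t psi phi n"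
proof -
  have Uaa: "U a a = mat 1" for a
  proof -
    have "U a a = (adj (U a a) ** U a a) ** U a a"
      using unitary[of a a] by (simp add: unitary_op_def)
    also have "\<dots> = adj (U a a) ** (U a a ** U a a)" by (simp add: matrix_mul_assoc)
    also have "\<dots> = mat 1" using unitary[of a a] evol[of a a a] by (simp add: unitary_op_def)
    finally show ?thesis .
  qed
  have Uadj: "adj (U a b) = U b a" for a b
  proof -
    have "U b a = (adj (U a b) ** U a b) ** U b a"
      using unitary[of a b] by (simp add: unitary_op_def)
    also have "\<dots> = adj (U a b) ** (U a b ** U b a)" by (simp add: matrix_mul_assoc)
    also have "\<dots> = adj (U a b)" using evol[of a b a] Uaa by simp
    finally show ?thesis by simp
  qed
  have Padj: "adj (heis_proj U t phi k i) = heis_proj U t phi k i" for k i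
    by (simp add: heis_proj_def adj_mult adj_adj adj_proj matrix_mul_assoc)
  define V where "V m = U (t m) (t 0)" for m
  have key: "adj (hist_op U t phi m \<alpha>) *v psi =
      path_amp U t psi phi m \<alpha> *s (adj (V m) *v vertex psi phi m (\<alpha> m))" for m \<alpha>
  proof (induction m)
    case 0
    then show ?case by (simp add: adj_one path_amp_def V_def Uaa vertex_def)
  next
    case (Suc m)
    have VV: "V (Suc m) ** adj (V m) = U (t (Suc m)) (t m)"
      by (simp add: V_def Uadj evol)
    have "adj (hist_op U t phi (Suc m) \<alpha>) *v psi
        = heis_proj U t phi (Suc m) (\<alpha> (Suc m)) *v (adj (hist_op U t phi m \<alpha>) *v psi)"
      by (simp add: adj_mult Padj matrix_vector_mul_assoc)
    also have "\<dots> = path_amp U t psi phi m \<alpha> *s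
        (adj (V (Suc m)) *v (proj (phi (Suc m) (\<alpha> (Suc m))) *v ((V (Suc m) ** adj (V m)) *v vertex psi phi m (\<alpha> m))))"
      by (simp add: Suc.IH mv_scale heis_proj_def V_def matrix_vector_mul_assoc matrix_mul_assoc)
    also have "\<dots> = path_amp U t psi phi m \<alpha> * green U t psi phi m (\<alpha> (Suc m)) (\<alpha> m) *s
        (adj (V (Suc m)) *v vertex psi phi (Suc m) (\<alpha> (Suc m)))"
      by (simp add: VV proj_mv mv_scale green_def vertex_def)
    finally show ?case by (simp add: path_amp_def)
  qed
  have coh: "coherence U t psi phi n \<alpha> \<beta> =
      path_amp U t psi phi n \<alpha> * cnj (path_amp U t psi phi n \<beta>) *
      cinner (vertex psi phi n (\<beta> n)) (vertex psi phi n (\<alpha> n))" for \<alpha> \<beta>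
  proof -
    have "coherence U t psi phi n \<alpha> \<beta> = cinner (adj (hist_op U t phi n \<beta>) *v psi) (adj (hist_op U t phi n \<alpha>) *v psi)"
      by (simp add: coherence_def ctrace_proj)
    also have "\<dots> = cnj (path_amp U t psi phi n \<beta>) * path_amp U t psi phi n \<alpha> *
       cinner (vertex psi phi n (\<beta> n)) (vertex psi phi n (\<alpha> n))"
      by (simp add: key cinner_scale unit_cinner unitary V_def)
    finally show ?thesis by (simp add: mult_ac)
  qed
  have vn: "cinner (vertex psi phi n i) (vertex psi phi n j) = (if n = 0 \<or> i = j then 1 else 0)" for i j
    using onb[of n i j] psi_norm by (auto simp: vertex_def)
  show ?thesis
    unfolding weakly_consistent_def
  proof (intro allI)
    fix \<alpha> \<beta> :: "nat \<Rightarrow> 'n"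
    show "complex_of_real (Re (coherence U t psi phi n \<alpha> \<beta>)) =
        (if (\<forall>k\<in>{1..n}. \<alpha> k = \<beta> k) then hist_prob U t psi phi n \<alpha> else 0)"
    proof (cases "\<forall>k\<in>{1..n}. \<alpha> k = \<beta> k")
      case True
      have "hist_op U t phi n \<alpha> = hist_op U t phi n \<beta>" using True by (rule hist_agree)
      then have eq: "coherence U t psi phi n \<alpha> \<beta> = hist_prob U t psi phi n \<alpha>"
        by (simp add: coherence_def hist_prob_def)
      have "hist_prob U t psi phi n \<alpha> = coherence U t psi phi n \<alpha> \<alpha>"
        by (simp add: coherence_def hist_prob_def)
      also have "\<dots> = complex_of_real ((cmod (path_amp U t psi phi n \<alpha>))\<^sup>2)"
        by (simp add: coh vn complex_norm_square[symmetric] del: of_real_power)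
      finally show ?thesis using True eq by simp
    next
      case False
      then obtain k where k: "k \<in> {1..n}" "\<alpha> k \<noteq> \<beta> k" by auto
      then have n0: "n \<noteq> 0" by auto
      show ?thesis
      proof (cases "\<alpha> n = \<beta> n")
        case False
        then show ?thesis using n0 by (subst if_not_P[OF \<open>\<not> (\<forall>k\<in>{1..n}. \<alpha> k = \<beta> k)\<close>]) (simp add: coh vn)
      next
        case True
        have "Re (path_amp U t psi phi n \<alpha> * cnj (path_amp U t psi phi n \<beta>)) = 0"
        proof (cases "is_path U t psi phi n \<alpha> \<and> is_path U t psi phi n \<beta>")
          case True
          then show ?thesis using loops k \<open>\<alpha> n = \<beta> n\<close> by blast
        next
          case False
          then have "path_amp U t psi phi n \<alpha> = 0 \<or> path_amp U t psi phi n \<beta> = 0"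
            by (auto simp: is_path_def path_amp_def)
          then show ?thesis by auto
        qed
        then show ?thesis using True n0 by (subst if_not_P[OF \<open>\<not> (\<forall>k\<in>{1..n}. \<alpha> k = \<beta> k)\<close>]) (simp add: coh vn)
      qed
    qed
  qed
qed

end
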